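(* Let $0<d<1/2$, let $\{x_t\}$ satisfy Assumption 1 (see context), and let $r_t=\sum_{j=0}^{t-1}\pi_j(d)$ for $t\ge1$. Then, as $T\to\infty$, $$\frac{\operatorname{Var}\left(\sum_{t=1}^T r_t x_t\right)}{\sum_{t=1}^T r_t^2}\;\longrightarrow\;\gamma_x(0)+2\sum_{h=1}^\infty\gamma_x(h)=\omega_x^2 .$$
   Context: For real $\delta$, the coefficients $\pi_j(\delta)$, $j\ge 0$, are defined by the binomial expansion $(1-z)^{\delta}=\sum_{j=0}^\infty \pi_j(\delta)z^j$, i.e. $\pi_0(\delta)=1$ and $\pi_j(\delta)=\prod_{k=1}^{j}\frac{k-1-\delta}{k}$. Assumption 1: $\{x_t\}$ is a covariance-stationary process $x_t=\sum_{j=0}^\infty c_j\varepsilon_{t-j}$ with $c_0=1$, $\sum_{j=0}^\infty|c_j|<\infty$, $c(1):=\sum_{j=0}^\infty c_j\neq 0$, where $\{\varepsilon_t\}$ is white noise with $E(\varepsilon_t)=0$, $E(\varepsilon_t^2)=\sigma^2>0$ and $E(\varepsilon_t\varepsilon_{t+h})=0$ for $h\ne0$. Its autocovariances are $\gamma_x(h)=E(x_tx_{t+h})$ and its long-run variance is $\omega_x^2=\sigma^2\big(\sum_{j=0}^\infty c_j\big)^2=\sum_{h=-\infty}^\infty\gamma_x(h)$. *)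

theory Defs
  imports "HOL-Probability.Probability"
begin

text \<open>Coefficients of the binomial expansion (1 - z) powr delta.\<close>
definition frac_coef :: "real \<Rightarrow> nat \<Rightarrow> real" where
  "frac_coef \<delta> j = (\<Prod>k = 1..j. (real k - 1 - \<delta>) / real k)"

definition partial_coef :: "real \<Rightarrow> nat \<Rightarrow> real" where
  "partial_coef d t = (\<Sum>j<t. frac_coef d j)"

text \<open>Linear process x_t = sum_j c_j eps_(t-j), defined pointwise (it converges a.s.).\<close>
definition lin_proc :: "(nat \<Rightarrow> real) \<Rightarrow> (int \<Rightarrow> 'a \<Rightarrow> real) \<Rightarrow> int \<Rightarrow> 'a \<Rightarrow> real" where
  "lin_proc c \<epsilon> t \<omega> = (\<Sum>j. c j * \<epsilon> (t - int j) \<omega>)"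

text \<open>Expectation, variance and autocovariance (written out; the library's
  expectation/variance are abbreviations inside the prob_space locale).\<close>
definition expect :: "'a measure \<Rightarrow> ('a \<Rightarrow> real) \<Rightarrow> real" where
  "expect M X = integral\<^sup>L M X"

definition Var :: "'a measure \<Rightarrow> ('a \<Rightarrow> real) \<Rightarrow> real" where
  "Var M X = integral\<^sup>L M (\<lambda>\<omega>. (X \<omega> - integral\<^sup>L M X)\<^sup>2)"

text \<open>gamma_x(h) = E(x_t x_(t+h)); by covariance stationarity this does not depend on t,
  so we take t = 0.\<close>
definition autocov :: "'a measure \<Rightarrow> (int \<Rightarrow> 'a \<Rightarrow> real) \<Rightarrow> int \<Rightarrow> real" where
  "autocov M x h = expect M (\<lambda>\<omega>. x 0 \<omega> * x h \<omega>)"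

end

theory Submission imports Defs "HOL-Analysis.Harmonic_Numbers" begin


lemma frac_coef_Suc: "frac_coef d (Suc j) = frac_coef d j * ((real j - d) / real (Suc j))"
  unfolding frac_coef_def by (simp add: prod.cl_ivl_Suc)

lemma partial_frac: "t \<ge> 1 \<Longrightarrow> - d * partial_coef d t = real t * frac_coef d t"
proof (induction t rule: dec_induct)
  case base
  then show ?case by (simp add: partial_coef_def frac_coef_def)
next
  case (step n)
  have "- d * partial_coef d (Suc n) = - d * partial_coef d n - d * frac_coef d n"
    by (simp add: partial_coef_def algebra_simps)
  also have "\<dots> = (real n - d) * frac_coef d n" using step.IH by (simp add: algebra_simps)
  also have "\<dots> = real (Suc n) * frac_coef d (Suc n)" by (simp add: frac_coef_Suc)
  finally show ?case .
qed

lemma partial_Suc: "t \<ge> 1 \<Longrightarrow> partial_coef d (Suc t) = partial_coef d t * ((real t - d) / real t)"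
proof -
  assume t: "t \<ge> 1"
  have "partial_coef d (Suc t) = partial_coef d t + frac_coef d t" by (simp add: partial_coef_def)
  also have "frac_coef d t = - d * partial_coef d t / real t" using partial_frac[OF t, of d] t by simp
  finally show ?thesis using t by (simp add: field_simps)
qed

definition rr :: "real \<Rightarrow> nat \<Rightarrow> real" where "rr d s = partial_coef d (Suc s)"

lemma rr_0: "rr d 0 = 1" by (simp add: rr_def partial_coef_def frac_coef_def)

lemma rr_Suc: "rr d (Suc s) = rr d s * ((real (Suc s) - d) / real (Suc s))"
  unfolding rr_def by (rule partial_Suc) simp

lemma rr_pos: "0 < d \<Longrightarrow> d < 1 \<Longrightarrow> 0 < rr d s \<and> rr d s \<le> 1"
proof (induction s)
  case 0 then show ?case by (simp add: rr_0)
next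
  case (Suc s)
  have a: "0 < (real (Suc s) - d) / real (Suc s)" "(real (Suc s) - d) / real (Suc s) \<le> 1"
    using Suc.prems by auto
  have "rr d (Suc s) = rr d s * ((real (Suc s) - d) / real (Suc s))" by (rule rr_Suc)
  then show ?case using Suc a by (simp only:) (intro conjI mult_pos_pos mult_le_one; auto)
qed

lemma rr_mono: assumes "0 < d" "d < 1" "s \<le> t" shows "rr d t \<le> rr d s"
  using assms(3) proof (induction t rule: dec_induct)
  case base then show ?case by simp
next
  case (step n)
  have a: "0 < (real (Suc n) - d) / real (Suc n)" "(real (Suc n) - d) / real (Suc n) \<le> 1"
    using step assms by auto
  have "rr d n * ((real (Suc n) - d) / real (Suc n)) \<le> rr d n * 1"
    using rr_pos[of d n] a assms by (intro mult_left_mono) auto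
  then have "rr d (Suc n) \<le> rr d n" unfolding rr_Suc by simp
  then show ?case using step by simp
qed

lemma cubic_ineq:
  fixes m d :: real assumes m: "m \<ge> 1" and d: "0 < d" and K: "2 * d * (m + 1) \<le> m"
  shows "m ^ 3 \<le> (m + 1) * (m - d)\<^sup>2"
proof -
  have "(m + 1) * (m - d)\<^sup>2 - m ^ 3 = m * (m - 2 * d * (m + 1)) + (m + 1) * d\<^sup>2"
    by (simp add: power2_eq_square power3_eq_cube algebra_simps)
  also have "\<dots> \<ge> 0" using m K by (intro add_nonneg_nonneg mult_nonneg_nonneg) auto
  finally show ?thesis by simp
qed

lemma rr_step:
  assumes d: "0 < d" "d < 1" and K: "2 * d * (real (Suc s) + 1) \<le> real (Suc s)"
  shows "real (Suc s) * (rr d s)\<^sup>2 \<le> real (Suc (Suc s)) * (rr d (Suc s))\<^sup>2"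
proof -
  let ?m = "real (Suc s)"
  have c: "?m ^ 3 \<le> (?m + 1) * (?m - d)\<^sup>2" by (rule cubic_ineq) (use d K in auto)
  have "real (Suc (Suc s)) * (rr d (Suc s))\<^sup>2 = (rr d s)\<^sup>2 * ((?m + 1) * (?m - d)\<^sup>2) / ?m\<^sup>2"
    unfolding rr_Suc by (simp add: power2_eq_square field_simps)
  also have "\<dots> \<ge> (rr d s)\<^sup>2 * ?m ^ 3 / ?m\<^sup>2"
    using c by (intro divide_right_mono mult_left_mono) auto
  also have "(rr d s)\<^sup>2 * ?m ^ 3 / ?m\<^sup>2 = ?m * (rr d s)\<^sup>2"
  proof -
    have "?m ^ 3 = ?m\<^sup>2 * ?m" by (simp add: power2_eq_square power3_eq_cube)
    then show ?thesis by simp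
  qed
  finally show ?thesis .
qed

lemma rr_sq_diverge:
  assumes d: "0 < d" "d < 1/2"
  shows "filterlim (\<lambda>T. \<Sum>s<T. (rr d s)\<^sup>2) at_top sequentially"
proof -
  define K :: nat where "K = nat \<lceil>2 * d / (1 - 2 * d)\<rceil>"
  have Kp: "2 * d * (real m + 1) \<le> real m" if "m \<ge> K" for m
  proof -
    have "2 * d / (1 - 2 * d) \<le> real K" unfolding K_def by linarith
    also have "\<dots> \<le> real m" using that by simp
    finally have "2 * d \<le> real m * (1 - 2 * d)" using d by (simp add: field_simps)
    then show ?thesis by (simp add: algebra_simps)
  qed
  define c where "c = real (Suc K) * (rr d K)\<^sup>2"
  have cpos: "c > 0" unfolding c_def using rr_pos[of d K] d by simp
  have lb: "c \<le> real (Suc s) * (rr d s)\<^sup>2" if "K \<le> s" for s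
    using that
  proof (induction s rule: dec_induct)
    case base then show ?case by (simp add: c_def)
  next
    case (step n)
    have "real (Suc n) * (rr d n)\<^sup>2 \<le> real (Suc (Suc n)) * (rr d (Suc n))\<^sup>2"
      by (rule rr_step) (use d Kp[of "Suc n"] step in auto)
    then show ?case using step by simp
  qed
  have pt: "(rr d s)\<^sup>2 \<ge> c * inverse (real (Suc s)) - (if s < K then c * inverse (real (Suc s)) else 0)" for s
  proof (cases "s < K")
    case True then show ?thesis by simp
  next
    case False
    then have "c \<le> real (Suc s) * (rr d s)\<^sup>2" using lb by simp
    then show ?thesis using False by (simp add: field_simps)
  qed
  have lbT: "(\<Sum>s<T. (rr d s)\<^sup>2) \<ge> c * harm T - c * harm K" for T
  proof -
    have A: "(\<Sum>s<T. (rr d s)\<^sup>2) \<ge> (\<Sum>s<T. c * inverse (real (Suc s)) - (if s < K then c * inverse (real (Suc s)) else 0))"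
      using pt by (intro sum_mono) auto
    have B: "(\<Sum>s<T. c * inverse (real (Suc s)) - (if s < K then c * inverse (real (Suc s)) else 0))
        = c * harm T - (\<Sum>s\<in>{..<T} \<inter> {s. s < K}. c * inverse (real (Suc s)))"
      by (simp add: sum_subtractf harm_altdef sum_distrib_left sum.If_cases)
    have C: "(\<Sum>s\<in>{..<T} \<inter> {s. s < K}. c * inverse (real (Suc s))) \<le> (\<Sum>s<K. c * inverse (real (Suc s)))"
      using cpos by (intro sum_mono2) auto
    have D: "(\<Sum>s<K. c * inverse (real (Suc s))) = c * harm K" by (simp add: harm_altdef sum_distrib_left)
    show ?thesis using A B C D by linarith
  qed
  have lim: "filterlim (\<lambda>T. c * harm T - c * harm K) at_top sequentially"
  proof -
    have "LIM T sequentially. (- c * harm K) + c * harm T :> at_top"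
      by (rule filterlim_tendsto_add_at_top[OF tendsto_const filterlim_tendsto_pos_mult_at_top[OF tendsto_const cpos harm_at_top]])
    then show ?thesis by simp
  qed
  show ?thesis by (rule filterlim_at_top_mono[OF lim always_eventually]) (use lbT in blast)
qed



definition AA :: "(nat \<Rightarrow> real) \<Rightarrow> nat \<Rightarrow> nat \<Rightarrow> real" where
  "AA a N k = (\<Sum>s<N. if s + k < N then a s * a (s + k) else 0)"

lemma AA_Suc: "AA a (Suc N) (Suc h) = AA a N (Suc h) + (if h < N then a (N - Suc h) * a N else 0)"
proof -
  have e: "\<And>s. s < N \<Longrightarrow> (if s + Suc h < Suc N then a s * a (s + Suc h) else 0)
     = (if s + Suc h < N then a s * a (s + Suc h) else 0) + (if s = N - Suc h \<and> h < N then a s * a (s + Suc h) else 0)"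
    by auto
  have "AA a (Suc N) (Suc h) = (\<Sum>s<N. if s + Suc h < Suc N then a s * a (s + Suc h) else 0)"
    by (simp add: AA_def)
  also have "\<dots> = (\<Sum>s<N. (if s + Suc h < N then a s * a (s + Suc h) else 0) + (if s = N - Suc h \<and> h < N then a s * a (s + Suc h) else 0))"
    by (rule sum.cong[OF refl]) (rule e, simp)
  also have "\<dots> = AA a N (Suc h) + (\<Sum>s<N. if s = N - Suc h \<and> h < N then a s * a (s + Suc h) else 0)"
    by (simp only: sum.distrib AA_def)
  also have "(\<Sum>s<N. if s = N - Suc h \<and> h < N then a s * a (s + Suc h) else 0) = (if h < N then a (N - Suc h) * a N else 0)"
  proof (cases "h < N")
    case True
    then have "(\<Sum>s<N. if s = N - Suc h \<and> h < N then a s * a (s + Suc h) else 0) = (\<Sum>s<N. if s = N - Suc h then a s * a (s + Suc h) else 0)"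
      by simp
    also have "\<dots> = a (N - Suc h) * a (N - Suc h + Suc h)" using True by (subst sum.delta) auto
    finally show ?thesis using True by simp
  qed simp
  finally show ?thesis .
qed

lemma AA_zero: "N \<le> k \<Longrightarrow> AA a N k = 0"
  by (simp add: AA_def)

lemma sq_ident:
  fixes a G :: "nat \<Rightarrow> real"
  shows "(\<Sum>s<N. \<Sum>t<N. a s * a t * G (if s \<le> t then t - s else s - t))
    = G 0 * (\<Sum>s<N. (a s)\<^sup>2) + 2 * (\<Sum>h<N. G (Suc h) * AA a N (Suc h))"
proof (induction N)
  case 0 then show ?case by simp
next
  case (Suc N)
  define E where "E = (\<Sum>s<N. a s * a N * G (N - s))"
  have L: "(\<Sum>s<Suc N. \<Sum>t<Suc N. a s * a t * G (if s \<le> t then t - s else s - t))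
     = (\<Sum>s<N. \<Sum>t<N. a s * a t * G (if s \<le> t then t - s else s - t)) + 2 * E + (a N)\<^sup>2 * G 0"
  proof -
    have e1: "(\<Sum>s<N. a s * a N * G (if s \<le> N then N - s else s - N)) = E"
      unfolding E_def by (intro sum.cong) auto
    have e2: "(\<Sum>t<N. a N * a t * G (if N \<le> t then t - N else N - t)) = E"
      unfolding E_def by (intro sum.cong) auto
    have e3: "(\<Sum>t<N. a N * a t * G (N - t)) = E" "(\<Sum>s<N. a s * a N * G (N - s)) = E"
      unfolding E_def by (auto intro!: sum.cong)
    show ?thesis by (simp add: sum.distrib e1 e2 e3 power2_eq_square)
  qed
  have E2: "E = (\<Sum>h<N. G (Suc h) * (a (N - Suc h) * a N))"
  proof -
    have "E = (\<Sum>h<N. a (N - Suc h) * a N * G (N - (N - Suc h)))"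
      unfolding E_def by (rule sum.nat_diff_reindex[symmetric])
    also have "\<dots> = (\<Sum>h<N. G (Suc h) * (a (N - Suc h) * a N))"
      by (intro sum.cong) auto
    finally show ?thesis .
  qed
  have R: "(\<Sum>h<Suc N. G (Suc h) * AA a (Suc N) (Suc h))
      = (\<Sum>h<N. G (Suc h) * AA a N (Suc h)) + E"
  proof -
    have "(\<Sum>h<Suc N. G (Suc h) * AA a (Suc N) (Suc h))
       = (\<Sum>h<Suc N. G (Suc h) * AA a N (Suc h)) + (\<Sum>h<Suc N. G (Suc h) * (if h < N then a (N - Suc h) * a N else 0))"
      by (simp add: AA_Suc distrib_left sum.distrib del: sum.lessThan_Suc)
    also have "(\<Sum>h<Suc N. G (Suc h) * AA a N (Suc h)) = (\<Sum>h<N. G (Suc h) * AA a N (Suc h))"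
      by (simp add: AA_zero)
    also have "(\<Sum>h<Suc N. G (Suc h) * (if h < N then a (N - Suc h) * a N else 0)) = E"
      unfolding E2 by simp
    finally show ?thesis .
  qed
  show ?case unfolding L R Suc.IH by (simp add: algebra_simps)
qed



lemma rr_sq_le1: "0 < d \<Longrightarrow> d < 1 \<Longrightarrow> (rr d s)\<^sup>2 \<le> 1"
  using rr_pos[of d s] by (intro power_le_one) auto

lemma AA_le_D:
  assumes d: "0 < d" "d < 1"
  shows "AA (rr d) T k \<le> (\<Sum>s<T. (rr d s)\<^sup>2)"
  unfolding AA_def
proof (intro sum_mono)
  fix s assume "s \<in> {..<T}"
  have "rr d s * rr d (s + k) \<le> rr d s * rr d s"
    using rr_pos[of d s] rr_mono[of d s "s + k"] d by (intro mult_left_mono) auto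
  then show "(if s + k < T then rr d s * rr d (s + k) else 0) \<le> (rr d s)\<^sup>2"
    by (auto simp: power2_eq_square)
qed

lemma AA_nonneg:
  assumes d: "0 < d" "d < 1"
  shows "0 \<le> AA (rr d) T k"
  unfolding AA_def using rr_pos[of d] d by (intro sum_nonneg) (auto intro!: mult_nonneg_nonneg less_imp_le)

lemma AA_ge_D:
  assumes d: "0 < d" "d < 1"
  shows "(\<Sum>s<T. (rr d s)\<^sup>2) - real k \<le> AA (rr d) T k"
proof (cases "k \<le> T")
  case False
  have "(\<Sum>s<T. (rr d s)\<^sup>2) \<le> (\<Sum>s<T. 1)"
    using rr_sq_le1[OF d] by (intro sum_mono) auto
  then show ?thesis using False AA_nonneg[OF d, of T k] by simp
next
  case True
  have "AA (rr d) T k \<ge> (\<Sum>s<T. if s + k < T then (rr d (s + k))\<^sup>2 else 0)"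
    unfolding AA_def
  proof (intro sum_mono)
    fix s assume "s \<in> {..<T}"
    have "rr d (s + k) * rr d (s + k) \<le> rr d s * rr d (s + k)"
      using rr_pos[of d "s+k"] rr_mono[of d s "s + k"] d by (intro mult_right_mono) auto
    then show "(if s + k < T then (rr d (s + k))\<^sup>2 else 0) \<le> (if s + k < T then rr d s * rr d (s + k) else 0)"
      by (auto simp: power2_eq_square)
  qed
  also have "(\<Sum>s<T. if s + k < T then (rr d (s + k))\<^sup>2 else 0) = (\<Sum>s\<in>{0..<T-k}. (rr d (s + k))\<^sup>2)"
  proof -
    have "{..<T} \<inter> {s. s + k < T} = {0..<T-k}" by auto
    then show ?thesis by (simp add: sum.If_cases)
  qed
  also have "\<dots> = (\<Sum>u\<in>{k..<T}. (rr d u)\<^sup>2)"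
    using sum.shift_bounds_nat_ivl[of "\<lambda>u. (rr d u)\<^sup>2" 0 k "T - k"] True by simp
  finally have A: "(\<Sum>u\<in>{k..<T}. (rr d u)\<^sup>2) \<le> AA (rr d) T k" .
  have "(\<Sum>s<T. (rr d s)\<^sup>2) = (\<Sum>s<k. (rr d s)\<^sup>2) + (\<Sum>u\<in>{k..<T}. (rr d u)\<^sup>2)"
    using True by (metis atLeast0LessThan sum.atLeastLessThan_concat zero_le)
  moreover have "(\<Sum>s<k. (rr d s)\<^sup>2) \<le> (\<Sum>s<k. 1)"
    using rr_sq_le1[OF d] by (intro sum_mono) auto
  ultimately show ?thesis using A by simp
qed

lemma ratio_lim:
  fixes G :: "nat \<Rightarrow> real"
  assumes d: "0 < d" "d < 1/2" and G: "summable (\<lambda>h. \<bar>G (Suc h)\<bar>)"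
  shows "(\<lambda>T. (\<Sum>s<T. \<Sum>t<T. rr d s * rr d t * G (if s \<le> t then t - s else s - t)) / (\<Sum>s<T. (rr d s)\<^sup>2))
     \<longlonglongrightarrow> G 0 + 2 * (\<Sum>h. G (Suc h))"
proof -
  have d1: "0 < d" "d < 1" using d by auto
  define D where "D T = (\<Sum>s<T. (rr d s)\<^sup>2)" for T
  define q where "q T k = AA (rr d) T (Suc k) / D T" for T k
  have Dlim: "filterlim D at_top sequentially" unfolding D_def by (rule rr_sq_diverge[OF d])
  have qb: "norm (q T k) \<le> 1" for T k
  proof (cases "D T = 0")
    case False
    have "D T \<ge> 0" unfolding D_def by (intro sum_nonneg) auto
    then show ?thesis using False AA_le_D[OF d1, of T "Suc k"] AA_nonneg[OF d1, of T "Suc k"]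
      unfolding q_def D_def[symmetric] by (simp add: abs_div_pos divide_le_eq_1)
  qed (simp add: q_def)
  have qlim: "(\<lambda>T. q T k) \<longlonglongrightarrow> 1" for k
  proof (rule tendsto_sandwich)
    have ev: "eventually (\<lambda>T. D T > 0) sequentially"
      using Dlim by (simp add: filterlim_at_top_dense)
    show "eventually (\<lambda>T. 1 - real (Suc k) * inverse (D T) \<le> q T k) sequentially"
      using ev
    proof eventually_elim
      case (elim T)
      have "D T - real (Suc k) \<le> AA (rr d) T (Suc k)" using AA_ge_D[OF d1, of T "Suc k"] unfolding D_def by simp
      have "1 - real (Suc k) * inverse (D T) = (D T - real (Suc k)) / D T" using elim by (simp add: field_simps)
      also have "\<dots> \<le> AA (rr d) T (Suc k) / D T" using elim \<open>D T - real (Suc k) \<le> AA (rr d) T (Suc k)\<close>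
        by (intro divide_right_mono) auto
      finally show ?case unfolding q_def .
    qed
    show "eventually (\<lambda>T. q T k \<le> 1) sequentially" using qb by (auto simp: abs_le_iff)
    show "(\<lambda>T. 1 - real (Suc k) * inverse (D T)) \<longlonglongrightarrow> 1"
      using tendsto_diff[OF tendsto_const tendsto_mult[OF tendsto_const tendsto_inverse_0_at_top[OF Dlim]], of 1 "real (Suc k)"]
      by simp
  qed simp
  have T: "eventually (\<lambda>n. summable (\<lambda>k. norm (G (Suc k) * q n k))) sequentially \<and>
           summable (\<lambda>n. norm (G (Suc n) * 1)) \<and>
           ((\<lambda>n. suminf (\<lambda>k. G (Suc k) * q n k)) \<longlongrightarrow> suminf (\<lambda>k. G (Suc k) * 1)) sequentially"
  proof (rule tannerys_theorem[where M = "\<lambda>k. \<bar>G (Suc k)\<bar>"])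
    show "((\<lambda>n. G (Suc k) * q n k) \<longlongrightarrow> G (Suc k) * 1) sequentially" for k
      by (intro tendsto_mult tendsto_const qlim)
    show "\<forall>\<^sub>F (k, n) in at_top \<times>\<^sub>F sequentially. norm (G (Suc k) * q n k) \<le> \<bar>G (Suc k)\<bar>"
      using qb by (intro always_eventually) (auto simp: abs_mult intro!: mult_left_le)
  qed (use G in auto)
  then have L: "(\<lambda>n. G 0 + 2 * suminf (\<lambda>k. G (Suc k) * q n k)) \<longlonglongrightarrow> G 0 + 2 * (\<Sum>h. G (Suc h))"
    by (auto intro!: tendsto_intros)
  show ?thesis
  proof (rule Lim_transform_eventually[OF L])
    have ev: "eventually (\<lambda>T. D T > 0) sequentially"
      using Dlim by (simp add: filterlim_at_top_dense)
    then show "eventually (\<lambda>T. G 0 + 2 * suminf (\<lambda>k. G (Suc k) * q T k) =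
       (\<Sum>s<T. \<Sum>t<T. rr d s * rr d t * G (if s \<le> t then t - s else s - t)) / (\<Sum>s<T. (rr d s)\<^sup>2)) sequentially"
    proof eventually_elim
      case (elim T)
      have sf: "suminf (\<lambda>k. G (Suc k) * q T k) = (\<Sum>k<T. G (Suc k) * q T k)"
        by (rule suminf_finite) (auto simp: q_def AA_zero)
      show ?case unfolding sf sq_ident D_def[symmetric] using elim
        by (simp add: q_def sum_divide_distrib[symmetric] sum_distrib_left field_simps)
    qed
  qed
qed



definition uu :: "(nat \<Rightarrow> real) \<Rightarrow> nat \<Rightarrow> real" where "uu c h = (\<Sum>i. c i * c (i + h))"
definition vv :: "(nat \<Rightarrow> real) \<Rightarrow> nat \<Rightarrow> real" where "vv c h = (\<Sum>i. \<bar>c i\<bar> * \<bar>c (i + h)\<bar>)"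

lemma abs_le_suminf: "summable (\<lambda>j. \<bar>(c::nat\<Rightarrow>real) j\<bar>) \<Longrightarrow> \<bar>c j\<bar> \<le> (\<Sum>j. \<bar>c j\<bar>)"
  using sum_le_suminf[of "\<lambda>j. \<bar>c j\<bar>" "{j}"] by simp

lemma summable_vv_term: fixes c :: "nat \<Rightarrow> real" assumes c: "summable (\<lambda>j. \<bar>c j\<bar>)"
  shows "summable (\<lambda>i. \<bar>c i\<bar> * \<bar>c (i + h)\<bar>)"
  by (rule summable_comparison_test'[OF summable_mult2[OF c, of "\<Sum>j. \<bar>c j\<bar>"]])
     (use abs_le_suminf[OF c] in \<open>auto intro!: mult_left_mono\<close>)

lemma summable_uu_term: fixes c :: "nat \<Rightarrow> real" assumes c: "summable (\<lambda>j. \<bar>c j\<bar>)"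
  shows "summable (\<lambda>i. c i * c (i + h))"
  by (rule summable_comparison_test'[OF summable_vv_term[OF c, of h]]) (auto simp: abs_mult)

lemma uu_le_vv: fixes c :: "nat \<Rightarrow> real" assumes c: "summable (\<lambda>j. \<bar>c j\<bar>)" shows "\<bar>uu c h\<bar> \<le> vv c h"
proof -
  have "\<bar>uu c h\<bar> \<le> (\<Sum>i. \<bar>c i * c (i + h)\<bar>)" unfolding uu_def
    by (rule summable_rabs) (use summable_vv_term[OF c, of h] in \<open>simp add: abs_mult\<close>)
  then show ?thesis by (simp add: vv_def abs_mult)
qed

lemma vv_nonneg: fixes c :: "nat \<Rightarrow> real" assumes c: "summable (\<lambda>j. \<bar>c j\<bar>)" shows "0 \<le> vv c h"
  unfolding vv_def by (intro suminf_nonneg summable_vv_term[OF c]) auto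

lemma summable_vv: fixes c :: "nat \<Rightarrow> real" assumes c: "summable (\<lambda>j. \<bar>c j\<bar>)" shows "summable (vv c)"
proof (rule summableI_nonneg_bounded[where x = "(\<Sum>j. \<bar>c j\<bar>) * (\<Sum>j. \<bar>c j\<bar>)"])
  show "0 \<le> vv c n" for n by (rule vv_nonneg[OF c])
  fix H
  have "(\<Sum>h<H. vv c h) = (\<Sum>i. \<Sum>h<H. \<bar>c i\<bar> * \<bar>c (i + h)\<bar>)"
    unfolding vv_def by (rule suminf_sum[symmetric]) (rule summable_vv_term[OF c])
  also have "\<dots> \<le> (\<Sum>i. \<bar>c i\<bar> * (\<Sum>j. \<bar>c j\<bar>))"
  proof (rule suminf_le)
    fix i
    have "(\<Sum>h<H. \<bar>c (i + h)\<bar>) \<le> (\<Sum>j. \<bar>c j\<bar>)"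
    proof -
      have "(\<Sum>h<H. \<bar>c (i + h)\<bar>) = (\<Sum>j\<in>(\<lambda>h. i + h) ` {..<H}. \<bar>c j\<bar>)"
        by (subst sum.reindex) (auto simp: inj_on_def)
      also have "\<dots> \<le> (\<Sum>j. \<bar>c j\<bar>)" by (rule sum_le_suminf[OF c]) auto
      finally show ?thesis .
    qed
    then show "(\<Sum>h<H. \<bar>c i\<bar> * \<bar>c (i + h)\<bar>) \<le> \<bar>c i\<bar> * (\<Sum>j. \<bar>c j\<bar>)"
      by (simp add: sum_distrib_left[symmetric] mult_left_mono)
  next
    show "summable (\<lambda>i. \<Sum>h<H. \<bar>c i\<bar> * \<bar>c (i + h)\<bar>)"
      by (intro summable_sum summable_vv_term[OF c])
    show "summable (\<lambda>i. \<bar>c i\<bar> * (\<Sum>j. \<bar>c j\<bar>))" by (rule summable_mult2[OF c])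
  qed
  also have "\<dots> = (\<Sum>j. \<bar>c j\<bar>) * (\<Sum>j. \<bar>c j\<bar>)" by (rule suminf_mult2[OF c, symmetric])
  finally show "(\<Sum>h<H. vv c h) \<le> (\<Sum>j. \<bar>c j\<bar>) * (\<Sum>j. \<bar>c j\<bar>)" .
qed

lemma AA_lim: fixes c :: "nat \<Rightarrow> real" assumes c: "summable (\<lambda>j. \<bar>c j\<bar>)" shows "(\<lambda>n. AA c n h) \<longlonglongrightarrow> uu c h"
proof (rule LIMSEQ_offset[where k = h])
  have "AA c (n + h) h = (\<Sum>i<n. c i * c (i + h))" for n
  proof -
    have "AA c (n + h) h = (\<Sum>i\<in>{..<n + h} \<inter> {i. i + h < n + h}. c i * c (i + h))"
      unfolding AA_def by (simp add: sum.If_cases)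
    also have "{..<n + h} \<inter> {i. i + h < n + h} = {..<n}" by auto
    finally show ?thesis .
  qed
  then show "(\<lambda>n. AA c (n + h) h) \<longlonglongrightarrow> uu c h"
    unfolding uu_def using summable_LIMSEQ[OF summable_uu_term[OF c, of h]] by simp
qed

lemma AA_le_vv: fixes c :: "nat \<Rightarrow> real" assumes c: "summable (\<lambda>j. \<bar>c j\<bar>)" shows "\<bar>AA c n h\<bar> \<le> vv c h"
proof -
  have "\<bar>AA c n h\<bar> \<le> (\<Sum>i<n. \<bar>if i + h < n then c i * c (i + h) else 0\<bar>)"
    unfolding AA_def by (rule sum_abs)
  also have "\<dots> \<le> (\<Sum>i<n. \<bar>c i\<bar> * \<bar>c (i + h)\<bar>)" by (intro sum_mono) (auto simp: abs_mult)
  also have "\<dots> \<le> vv c h" unfolding vv_def by (intro sum_le_suminf summable_vv_term[OF c]) auto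
  finally show ?thesis .
qed

lemma uu_identity:
  fixes c :: "nat \<Rightarrow> real" assumes c: "summable (\<lambda>j. \<bar>c j\<bar>)"
  shows "uu c 0 + 2 * (\<Sum>h. uu c (Suc h)) = (suminf c)\<^sup>2"
proof -
  have sc: "summable c" using c summable_rabs_cancel by blast
  have e: "(\<Sum>s<N. c s)\<^sup>2 = AA c N 0 + 2 * (\<Sum>h. AA c N (Suc h))" for N
  proof -
    have "(\<Sum>s<N. c s)\<^sup>2 = (\<Sum>s<N. \<Sum>t<N. c s * c t * (\<lambda>_. 1::real) (if s \<le> t then t - s else s - t))"
      by (simp add: power2_eq_square sum_product)
    also have "\<dots> = (\<Sum>s<N. (c s)\<^sup>2) + 2 * (\<Sum>h<N. AA c N (Suc h))"
      by (subst sq_ident) simp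
    also have "(\<Sum>s<N. (c s)\<^sup>2) = AA c N 0" by (simp add: AA_def power2_eq_square)
    also have "(\<Sum>h<N. AA c N (Suc h)) = (\<Sum>h. AA c N (Suc h))"
      by (rule suminf_finite[symmetric]) (auto simp: AA_zero)
    finally show ?thesis .
  qed
  have T: "eventually (\<lambda>n. summable (\<lambda>k. norm (AA c n (Suc k)))) sequentially \<and>
           summable (\<lambda>n. norm (uu c (Suc n))) \<and>
           ((\<lambda>n. suminf (\<lambda>k. AA c n (Suc k))) \<longlongrightarrow> suminf (\<lambda>k. uu c (Suc k))) sequentially"
  proof (rule tannerys_theorem[where M = "\<lambda>k. vv c (Suc k)"])
    show "(\<lambda>n. AA c n (Suc k)) \<longlonglongrightarrow> uu c (Suc k)" for k by (rule AA_lim[OF c])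
    show "\<forall>\<^sub>F (k, n) in at_top \<times>\<^sub>F sequentially. norm (AA c n (Suc k)) \<le> vv c (Suc k)"
      using AA_le_vv[OF c] by (intro always_eventually) auto
    show "summable (\<lambda>k. vv c (Suc k))" using summable_vv[OF c] by (simp add: summable_Suc_iff)
  qed auto
  have L1: "(\<lambda>N. (\<Sum>s<N. c s)\<^sup>2) \<longlonglongrightarrow> (suminf c)\<^sup>2"
    by (intro tendsto_power summable_LIMSEQ[OF sc])
  have L2: "(\<lambda>N. AA c N 0 + 2 * (\<Sum>h. AA c N (Suc h))) \<longlonglongrightarrow> uu c 0 + 2 * (\<Sum>h. uu c (Suc h))"
    using T AA_lim[OF c, of 0] by (auto intro!: tendsto_intros)
  show ?thesis using LIMSEQ_unique[OF L2] L1 unfolding e by simp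
qed



lemma abs_le_1_sq: "\<bar>x::real\<bar> \<le> 1 + x\<^sup>2"
proof -
  have "0 \<le> (\<bar>x\<bar> - 1)\<^sup>2" by simp
  then have "2 * \<bar>x\<bar> \<le> 1 + x\<^sup>2" by (simp add: power2_diff power2_abs algebra_simps)
  then show ?thesis by simp
qed

lemma abs_mult_le_sq: "\<bar>(a::real) * b\<bar> \<le> (a\<^sup>2 + b\<^sup>2) / 2"
proof -
  have "0 \<le> (\<bar>a\<bar> - \<bar>b\<bar>)\<^sup>2" by simp
  then show ?thesis by (simp add: power2_diff power2_abs abs_mult algebra_simps)
qed

locale lp = prob_space M for M :: "'a measure" +
  fixes \<epsilon> :: "int \<Rightarrow> 'a \<Rightarrow> real" and c :: "nat \<Rightarrow> real" and \<sigma>2 :: real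
  assumes eps_meas[measurable]: "\<And>t. \<epsilon> t \<in> borel_measurable M"
    and eps_L2: "\<And>t. integrable M (\<lambda>\<omega>. (\<epsilon> t \<omega>)\<^sup>2)"
    and eps_mean: "\<And>t. integral\<^sup>L M (\<epsilon> t) = 0"
    and eps_var: "\<And>t. integral\<^sup>L M (\<lambda>\<omega>. (\<epsilon> t \<omega>)\<^sup>2) = \<sigma>2"
    and eps_uncorr: "\<And>s t. s \<noteq> t \<Longrightarrow> integral\<^sup>L M (\<lambda>\<omega>. \<epsilon> s \<omega> * \<epsilon> t \<omega>) = 0"
    and c_abs: "summable (\<lambda>j. \<bar>c j\<bar>)"
begin

lemma eps_int: "integrable M (\<epsilon> t)"
  by (rule Bochner_Integration.integrable_bound[of _ "\<lambda>\<omega>. 1 + (\<epsilon> t \<omega>)\<^sup>2"]) (auto intro!: eps_L2 abs_le_1_sq)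

lemma eps_prod_int: "integrable M (\<lambda>\<omega>. \<epsilon> s \<omega> * \<epsilon> t \<omega>)"
proof (rule Bochner_Integration.integrable_bound[of _ "\<lambda>\<omega>. ((\<epsilon> s \<omega>)\<^sup>2 + (\<epsilon> t \<omega>)\<^sup>2) / 2"])
  show "integrable M (\<lambda>\<omega>. ((\<epsilon> s \<omega>)\<^sup>2 + (\<epsilon> t \<omega>)\<^sup>2) / 2)"
    by (intro integrable_divide Bochner_Integration.integrable_add eps_L2)
  show "AE x in M. norm (\<epsilon> s x * \<epsilon> t x) \<le> norm (((\<epsilon> s x)\<^sup>2 + (\<epsilon> t x)\<^sup>2) / 2)"
  proof (rule AE_I2)
    fix x
    have "\<bar>\<epsilon> s x * \<epsilon> t x\<bar> \<le> ((\<epsilon> s x)\<^sup>2 + (\<epsilon> t x)\<^sup>2) / 2" by (rule abs_mult_le_sq)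
    then show "norm (\<epsilon> s x * \<epsilon> t x) \<le> norm (((\<epsilon> s x)\<^sup>2 + (\<epsilon> t x)\<^sup>2) / 2)"
      by (simp only: real_norm_def)
  qed
qed simp

lemma eps_prod: "integral\<^sup>L M (\<lambda>\<omega>. \<epsilon> s \<omega> * \<epsilon> t \<omega>) = (if s = t then \<sigma>2 else 0)"
  using eps_uncorr[of s t] eps_var[of s] by (auto simp: power2_eq_square)

lemma eps_abs_prod: "integral\<^sup>L M (\<lambda>\<omega>. \<bar>\<epsilon> s \<omega> * \<epsilon> t \<omega>\<bar>) \<le> \<sigma>2"
proof -
  have "integral\<^sup>L M (\<lambda>\<omega>. \<bar>\<epsilon> s \<omega> * \<epsilon> t \<omega>\<bar>) \<le> integral\<^sup>L M (\<lambda>\<omega>. ((\<epsilon> s \<omega>)\<^sup>2 + (\<epsilon> t \<omega>)\<^sup>2) / 2)"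
    by (intro integral_mono integrable_abs eps_prod_int integrable_divide Bochner_Integration.integrable_add eps_L2 abs_mult_le_sq)
  also have "\<dots> = \<sigma>2" using eps_var Bochner_Integration.integrable_add[OF eps_L2 eps_L2, of s t] by (simp add: integral_add eps_L2)
  finally show ?thesis .
qed

definition Y :: "int \<Rightarrow> 'a \<Rightarrow> ennreal" where
  "Y t \<omega> = (\<Sum>j. ennreal (\<bar>c j\<bar> * \<bar>\<epsilon> (t - int j) \<omega>\<bar>))"

lemma Y_meas[measurable]: "Y t \<in> borel_measurable M"
  unfolding Y_def by measurable

lemma Y_prod_finite: "(\<integral>\<^sup>+\<omega>. Y a \<omega> * Y b \<omega> \<partial>M) < \<infinity>"
proof -
  define S where "S = (\<Sum>j. \<bar>c j\<bar>)"
  have "(\<integral>\<^sup>+\<omega>. Y a \<omega> * Y b \<omega> \<partial>M)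
      = (\<integral>\<^sup>+\<omega>. (\<Sum>i. \<Sum>j. ennreal (\<bar>c i\<bar> * \<bar>\<epsilon> (a - int i) \<omega>\<bar>) * ennreal (\<bar>c j\<bar> * \<bar>\<epsilon> (b - int j) \<omega>\<bar>)) \<partial>M)"
    unfolding Y_def by (simp only: ennreal_suminf_multc ennreal_suminf_cmult)
  also have "\<dots> = (\<Sum>i. \<Sum>j. \<integral>\<^sup>+\<omega>. ennreal (\<bar>c i\<bar> * \<bar>\<epsilon> (a - int i) \<omega>\<bar>) * ennreal (\<bar>c j\<bar> * \<bar>\<epsilon> (b - int j) \<omega>\<bar>) \<partial>M)"
    apply (subst nn_integral_suminf)
     apply measurable
    apply (rule arg_cong[where f = suminf], rule ext, rule nn_integral_suminf)
    apply measurable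
    done
  also have "\<dots> \<le> (\<Sum>i. \<Sum>j. ennreal (\<bar>c i\<bar> * \<bar>c j\<bar> * \<sigma>2))"
  proof (intro suminf_le summableI allI)
    fix i j
    have "(\<integral>\<^sup>+\<omega>. ennreal (\<bar>c i\<bar> * \<bar>\<epsilon> (a - int i) \<omega>\<bar>) * ennreal (\<bar>c j\<bar> * \<bar>\<epsilon> (b - int j) \<omega>\<bar>) \<partial>M)
        = (\<integral>\<^sup>+\<omega>. ennreal (\<bar>c i\<bar> * \<bar>c j\<bar> * \<bar>\<epsilon> (a - int i) \<omega> * \<epsilon> (b - int j) \<omega>\<bar>) \<partial>M)"
      by (intro nn_integral_cong) (simp add: ennreal_mult[symmetric] abs_mult mult_ac)
    also have "\<dots> = ennreal (integral\<^sup>L M (\<lambda>\<omega>. \<bar>c i\<bar> * \<bar>c j\<bar> * \<bar>\<epsilon> (a - int i) \<omega> * \<epsilon> (b - int j) \<omega>\<bar>))"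
      by (intro nn_integral_eq_integral integrable_mult_right integrable_abs eps_prod_int) auto
    also have "\<dots> \<le> ennreal (\<bar>c i\<bar> * \<bar>c j\<bar> * \<sigma>2)"
      using eps_abs_prod[of "a - int i" "b - int j"]
      by (intro ennreal_leI) (auto intro!: mult_left_mono)
    finally show "(\<integral>\<^sup>+\<omega>. ennreal (\<bar>c i\<bar> * \<bar>\<epsilon> (a - int i) \<omega>\<bar>) * ennreal (\<bar>c j\<bar> * \<bar>\<epsilon> (b - int j) \<omega>\<bar>) \<partial>M)
        \<le> ennreal (\<bar>c i\<bar> * \<bar>c j\<bar> * \<sigma>2)" .
  qed
  also have "\<dots> < \<infinity>"
  proof -
    have "(\<Sum>j. ennreal (\<bar>c i\<bar> * \<bar>c j\<bar> * \<sigma>2)) \<le> ennreal (\<bar>c i\<bar> * \<bar>\<sigma>2\<bar> * S)" for i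
    proof -
      have "(\<Sum>j. ennreal (\<bar>c i\<bar> * \<bar>c j\<bar> * \<sigma>2)) \<le> (\<Sum>j. ennreal (\<bar>c i\<bar> * \<bar>\<sigma>2\<bar> * \<bar>c j\<bar>))"
        by (intro suminf_le summableI ennreal_leI) (auto simp: mult_ac intro!: mult_right_mono)
      also have "\<dots> = ennreal (\<Sum>j. \<bar>c i\<bar> * \<bar>\<sigma>2\<bar> * \<bar>c j\<bar>)"
        by (intro suminf_ennreal2 summable_mult c_abs) auto
      also have "\<dots> = ennreal (\<bar>c i\<bar> * \<bar>\<sigma>2\<bar> * S)" unfolding S_def by (subst suminf_mult[OF c_abs]) simp
      finally show ?thesis .
    qed
    then have "(\<Sum>i. \<Sum>j. ennreal (\<bar>c i\<bar> * \<bar>c j\<bar> * \<sigma>2)) \<le> (\<Sum>i. ennreal (\<bar>c i\<bar> * (\<bar>\<sigma>2\<bar> * S)))"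
      by (intro suminf_le summableI) (auto simp: mult_ac)
    also have "\<dots> = ennreal (\<Sum>i. \<bar>c i\<bar> * (\<bar>\<sigma>2\<bar> * S))"
      using c_abs by (intro suminf_ennreal2 summable_mult2) (auto simp: S_def intro!: suminf_nonneg mult_nonneg_nonneg)
    also have "\<dots> < \<infinity>" by simp
    finally show ?thesis .
  qed
  finally show ?thesis .
qed

end


context lp begin

definition Yr :: "int \<Rightarrow> 'a \<Rightarrow> real" where "Yr t \<omega> = enn2real (Y t \<omega>)"
definition S :: "nat \<Rightarrow> int \<Rightarrow> 'a \<Rightarrow> real" where "S n t \<omega> = (\<Sum>j<n. c j * \<epsilon> (t - int j) \<omega>)"

lemma Yr_meas[measurable]: "Yr t \<in> borel_measurable M" unfolding Yr_def by measurable
lemma S_meas[measurable]: "S n t \<in> borel_measurable M" unfolding S_def by measurable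
lemma x_meas[measurable]: "lin_proc c \<epsilon> t \<in> borel_measurable M" unfolding lin_proc_def by measurable

lemma Yr_nonneg: "0 \<le> Yr t \<omega>" by (simp add: Yr_def)

lemma Yr_prod_int: "integrable M (\<lambda>\<omega>. Yr a \<omega> * Yr b \<omega>)"
  unfolding integrable_iff_bounded
proof
  show "(\<lambda>\<omega>. Yr a \<omega> * Yr b \<omega>) \<in> borel_measurable M" by measurable
  have "(\<integral>\<^sup>+\<omega>. ennreal (norm (Yr a \<omega> * Yr b \<omega>)) \<partial>M) \<le> (\<integral>\<^sup>+\<omega>. Y a \<omega> * Y b \<omega> \<partial>M)"
  proof (intro nn_integral_mono)
    fix \<omega>
    have "ennreal (norm (Yr a \<omega> * Yr b \<omega>)) = ennreal (Yr a \<omega>) * ennreal (Yr b \<omega>)"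
      using Yr_nonneg by (simp add: ennreal_mult abs_mult)
    also have "\<dots> \<le> Y a \<omega> * Y b \<omega>"
      unfolding Yr_def by (intro mult_mono) (auto simp: ennreal_enn2real_if)
    finally show "ennreal (norm (Yr a \<omega> * Yr b \<omega>)) \<le> Y a \<omega> * Y b \<omega>" .
  qed
  also have "\<dots> < \<infinity>" by (rule Y_prod_finite)
  finally show "(\<integral>\<^sup>+\<omega>. ennreal (norm (Yr a \<omega> * Yr b \<omega>)) \<partial>M) < \<infinity>" .
qed

lemma AE_fin: "AE \<omega> in M. \<forall>t. Y t \<omega> \<noteq> \<top>"
  unfolding AE_all_countable
proof
  fix t
  have "AE \<omega> in M. Y t \<omega> * Y t \<omega> \<noteq> \<infinity>"
    by (rule nn_integral_PInf_AE) (use Y_prod_finite[of t t] in auto)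
  then show "AE \<omega> in M. Y t \<omega> \<noteq> \<top>"
    by eventually_elim (auto simp: ennreal_mult_eq_top_iff)
qed

lemma pw:
  assumes fin: "Y t \<omega> \<noteq> \<top>"
  shows "summable (\<lambda>j. \<bar>c j * \<epsilon> (t - int j) \<omega>\<bar>)"
    and "Yr t \<omega> = (\<Sum>j. \<bar>c j * \<epsilon> (t - int j) \<omega>\<bar>)"
    and "(\<lambda>n. S n t \<omega>) \<longlonglongrightarrow> lin_proc c \<epsilon> t \<omega>"
    and "\<bar>S n t \<omega>\<bar> \<le> Yr t \<omega>"
    and "\<bar>lin_proc c \<epsilon> t \<omega>\<bar> \<le> Yr t \<omega>"
proof -
  show sm: "summable (\<lambda>j. \<bar>c j * \<epsilon> (t - int j) \<omega>\<bar>)"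
    by (rule summable_suminf_not_top) (use fin in \<open>auto simp: Y_def abs_mult\<close>)
  show Yr: "Yr t \<omega> = (\<Sum>j. \<bar>c j * \<epsilon> (t - int j) \<omega>\<bar>)"
  proof -
    have "(\<Sum>j. ennreal (\<bar>c j\<bar> * \<bar>\<epsilon> (t - int j) \<omega>\<bar>)) = ennreal (\<Sum>j. \<bar>c j\<bar> * \<bar>\<epsilon> (t - int j) \<omega>\<bar>)"
      by (rule suminf_ennreal2) (use sm in \<open>auto simp: abs_mult\<close>)
    moreover have "0 \<le> (\<Sum>j. \<bar>c j\<bar> * \<bar>\<epsilon> (t - int j) \<omega>\<bar>)"
      by (rule suminf_nonneg) (use sm in \<open>auto simp: abs_mult\<close>)
    ultimately show ?thesis unfolding Yr_def Y_def by (simp add: abs_mult)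
  qed
  have s: "summable (\<lambda>j. c j * \<epsilon> (t - int j) \<omega>)" using sm by (rule summable_rabs_cancel)
  show "(\<lambda>n. S n t \<omega>) \<longlonglongrightarrow> lin_proc c \<epsilon> t \<omega>"
    unfolding S_def lin_proc_def by (rule summable_LIMSEQ[OF s])
  have "\<bar>S n t \<omega>\<bar> \<le> (\<Sum>j<n. \<bar>c j * \<epsilon> (t - int j) \<omega>\<bar>)" unfolding S_def by (rule sum_abs)
  also have "\<dots> \<le> (\<Sum>j. \<bar>c j * \<epsilon> (t - int j) \<omega>\<bar>)" by (intro sum_le_suminf sm) auto
  finally show "\<bar>S n t \<omega>\<bar> \<le> Yr t \<omega>" unfolding Yr .
  show "\<bar>lin_proc c \<epsilon> t \<omega>\<bar> \<le> Yr t \<omega>" unfolding Yr lin_proc_def by (rule summable_rabs[OF sm])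
qed

lemma x_int: "integrable M (lin_proc c \<epsilon> a)" and x_mean: "integral\<^sup>L M (lin_proc c \<epsilon> a) = 0"
proof -
  have w: "integrable M (\<lambda>\<omega>. 1 + Yr a \<omega> * Yr a \<omega>)"
    by (intro Bochner_Integration.integrable_add integrable_const Yr_prod_int)
  have b: "\<bar>y\<bar> \<le> Yr a \<omega> \<Longrightarrow> \<bar>y\<bar> \<le> 1 + Yr a \<omega> * Yr a \<omega>" for y \<omega>
    using abs_le_1_sq[of "Yr a \<omega>"] Yr_nonneg[of a \<omega>] by (simp add: power2_eq_square)
  show "integrable M (lin_proc c \<epsilon> a)"
  proof (rule Bochner_Integration.integrable_bound[OF w])
    show "AE \<omega> in M. norm (lin_proc c \<epsilon> a \<omega>) \<le> norm (1 + Yr a \<omega> * Yr a \<omega>)"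
      using AE_fin
    proof eventually_elim
      case (elim \<omega>)
      then have "\<bar>lin_proc c \<epsilon> a \<omega>\<bar> \<le> 1 + Yr a \<omega> * Yr a \<omega>" by (intro b pw) auto
      moreover have "0 \<le> 1 + Yr a \<omega> * Yr a \<omega>" using Yr_nonneg[of a \<omega>] by simp
      ultimately show ?case by simp
    qed
  qed simp
  have "(\<lambda>n. integral\<^sup>L M (S n a)) \<longlonglongrightarrow> integral\<^sup>L M (lin_proc c \<epsilon> a)"
  proof (rule integral_dominated_convergence[OF _ _ w])
    show "AE x in M. (\<lambda>n. S n a x) \<longlonglongrightarrow> lin_proc c \<epsilon> a x"
      using AE_fin by eventually_elim (auto intro: pw)
    show "AE x in M. norm (S n a x) \<le> 1 + Yr a x * Yr a x" for n
      using AE_fin by eventually_elim (auto intro: pw b)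
  qed auto
  moreover have "integral\<^sup>L M (S n a) = 0" for n
    unfolding S_def by (simp add: eps_int eps_mean)
  ultimately show "integral\<^sup>L M (lin_proc c \<epsilon> a) = 0" using LIMSEQ_unique[OF tendsto_const[of 0]] by auto
qed

end


context lp begin

lemma x_prod_int: "integrable M (\<lambda>\<omega>. lin_proc c \<epsilon> a \<omega> * lin_proc c \<epsilon> b \<omega>)"
proof (rule Bochner_Integration.integrable_bound[OF Yr_prod_int[of a b]])
  show "AE \<omega> in M. norm (lin_proc c \<epsilon> a \<omega> * lin_proc c \<epsilon> b \<omega>) \<le> norm (Yr a \<omega> * Yr b \<omega>)"
    using AE_fin
  proof eventually_elim
    case (elim \<omega>)
    then have "\<bar>lin_proc c \<epsilon> a \<omega>\<bar> * \<bar>lin_proc c \<epsilon> b \<omega>\<bar> \<le> Yr a \<omega> * Yr b \<omega>"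
      by (intro mult_mono pw Yr_nonneg) auto
    then show ?case using Yr_nonneg[of a \<omega>] Yr_nonneg[of b \<omega>] by (simp add: abs_mult)
  qed
qed simp

lemma S_prod_integral:
  assumes ab: "a \<le> b"
  shows "integral\<^sup>L M (\<lambda>\<omega>. S n a \<omega> * S n b \<omega>) = \<sigma>2 * AA c n (nat (b - a))"
proof -
  define h where "h = nat (b - a)"
  have eq: "(\<lambda>\<omega>. S n a \<omega> * S n b \<omega>) = (\<lambda>\<omega>. \<Sum>i<n. \<Sum>j<n. (c i * c j) * (\<epsilon> (a - int i) \<omega> * \<epsilon> (b - int j) \<omega>))"
    unfolding S_def by (simp add: sum_product mult_ac)
  have "integral\<^sup>L M (\<lambda>\<omega>. S n a \<omega> * S n b \<omega>)
      = (\<Sum>i<n. \<Sum>j<n. (c i * c j) * integral\<^sup>L M (\<lambda>\<omega>. \<epsilon> (a - int i) \<omega> * \<epsilon> (b - int j) \<omega>))"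
    unfolding eq
    by (simp add: Bochner_Integration.integral_sum Bochner_Integration.integrable_sum eps_prod_int)
  also have "\<dots> = (\<Sum>i<n. \<Sum>j<n. if j = i + h then \<sigma>2 * (c i * c j) else 0)"
  proof (intro sum.cong refl)
    fix i j
    have "(a - int i = b - int j) = (j = i + h)" using ab unfolding h_def by auto
    then show "(c i * c j) * integral\<^sup>L M (\<lambda>\<omega>. \<epsilon> (a - int i) \<omega> * \<epsilon> (b - int j) \<omega>)
        = (if j = i + h then \<sigma>2 * (c i * c j) else 0)"
      by (simp add: eps_prod)
  qed
  also have "\<dots> = (\<Sum>i<n. if i + h < n then \<sigma>2 * (c i * c (i + h)) else 0)"
    by (intro sum.cong refl) (simp add: sum.delta')
  also have "\<dots> = \<sigma>2 * AA c n h"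
    unfolding AA_def sum_distrib_left by (intro sum.cong refl) simp
  finally show ?thesis unfolding h_def .
qed

lemma x_prod:
  assumes ab: "a \<le> b"
  shows "integral\<^sup>L M (\<lambda>\<omega>. lin_proc c \<epsilon> a \<omega> * lin_proc c \<epsilon> b \<omega>) = \<sigma>2 * uu c (nat (b - a))"
proof -
  have "(\<lambda>n. integral\<^sup>L M (\<lambda>\<omega>. S n a \<omega> * S n b \<omega>)) \<longlonglongrightarrow> integral\<^sup>L M (\<lambda>\<omega>. lin_proc c \<epsilon> a \<omega> * lin_proc c \<epsilon> b \<omega>)"
  proof (rule integral_dominated_convergence[OF _ _ Yr_prod_int[of a b]])
    show "AE x in M. (\<lambda>n. S n a x * S n b x) \<longlonglongrightarrow> lin_proc c \<epsilon> a x * lin_proc c \<epsilon> b x"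
      using AE_fin by eventually_elim (auto intro!: tendsto_mult pw)
    show "AE x in M. norm (S n a x * S n b x) \<le> Yr a x * Yr b x" for n
      using AE_fin
    proof eventually_elim
      case (elim \<omega>)
      then have "\<bar>S n a \<omega>\<bar> * \<bar>S n b \<omega>\<bar> \<le> Yr a \<omega> * Yr b \<omega>"
        by (intro mult_mono pw Yr_nonneg) auto
      then show ?case by (simp add: abs_mult)
    qed
  qed auto
  moreover have "(\<lambda>n. integral\<^sup>L M (\<lambda>\<omega>. S n a \<omega> * S n b \<omega>)) \<longlonglongrightarrow> \<sigma>2 * uu c (nat (b - a))"
    unfolding S_prod_integral[OF ab] by (intro tendsto_mult tendsto_const AA_lim c_abs)
  ultimately show ?thesis using LIMSEQ_unique by blast
qed

end


context lp begin

lemma x_prod_gen: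
  "integral\<^sup>L M (\<lambda>\<omega>. lin_proc c \<epsilon> (int (Suc s)) \<omega> * lin_proc c \<epsilon> (int (Suc t)) \<omega>)
    = \<sigma>2 * uu c (if s \<le> t then t - s else s - t)"
proof (cases "s \<le> t")
  case True
  then have "nat (int (Suc t) - int (Suc s)) = t - s" by auto
  then show ?thesis using x_prod[of "int (Suc s)" "int (Suc t)"] True by simp
next
  case False
  then have "nat (int (Suc s) - int (Suc t)) = s - t" by auto
  then show ?thesis using x_prod[of "int (Suc t)" "int (Suc s)"] False by (simp add: mult.commute)
qed

lemma Var_formula:
  "Var M (\<lambda>\<omega>. \<Sum>t = 1..T. partial_coef d t * lin_proc c \<epsilon> (int t) \<omega>)
    = (\<Sum>s<T. \<Sum>t<T. rr d s * rr d t * (\<sigma>2 * uu c (if s \<le> t then t - s else s - t)))"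
proof -
  define X where "X \<omega> = (\<Sum>s<T. rr d s * lin_proc c \<epsilon> (int (Suc s)) \<omega>)" for \<omega>
  have Xeq: "(\<lambda>\<omega>. \<Sum>t = 1..T. partial_coef d t * lin_proc c \<epsilon> (int t) \<omega>) = X"
    unfolding X_def rr_def by (intro ext) (simp add: sum.atLeast1_atMost_eq)
  have EX: "integral\<^sup>L M X = 0"
    unfolding X_def by (simp add: Bochner_Integration.integral_sum x_int x_mean)
  have sq: "(\<lambda>\<omega>. (X \<omega> - 0)\<^sup>2) = (\<lambda>\<omega>. \<Sum>s<T. \<Sum>t<T. (rr d s * rr d t) *
        (lin_proc c \<epsilon> (int (Suc s)) \<omega> * lin_proc c \<epsilon> (int (Suc t)) \<omega>))"
    unfolding X_def by (simp add: power2_eq_square sum_product mult_ac)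
  have "Var M X = (\<Sum>s<T. \<Sum>t<T. (rr d s * rr d t) *
        integral\<^sup>L M (\<lambda>\<omega>. lin_proc c \<epsilon> (int (Suc s)) \<omega> * lin_proc c \<epsilon> (int (Suc t)) \<omega>))"
    unfolding Var_def EX sq
    by (simp add: Bochner_Integration.integral_sum Bochner_Integration.integrable_sum x_prod_int)
  also have "\<dots> = (\<Sum>s<T. \<Sum>t<T. rr d s * rr d t * (\<sigma>2 * uu c (if s \<le> t then t - s else s - t)))"
    by (simp only: x_prod_gen)
  finally show ?thesis unfolding Xeq .
qed

end

theorem mainTheorem3:
  fixes M :: "'a measure" and \<epsilon> :: "int \<Rightarrow> 'a \<Rightarrow> real"
    and c :: "nat \<Rightarrow> real" and \<sigma>2 d :: real
  assumes "prob_space M"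
    and eps_meas: "\<And>t. \<epsilon> t \<in> borel_measurable M"
    and eps_L2: "\<And>t. integrable M (\<lambda>\<omega>. (\<epsilon> t \<omega>)\<^sup>2)"
    and eps_mean: "\<And>t. expect M (\<epsilon> t) = 0"
    and eps_var: "\<And>t. expect M (\<lambda>\<omega>. (\<epsilon> t \<omega>)\<^sup>2) = \<sigma>2"
    and sigma_pos: "\<sigma>2 > 0"
    and eps_uncorr: "\<And>s t. s \<noteq> t \<Longrightarrow> expect M (\<lambda>\<omega>. \<epsilon> s \<omega> * \<epsilon> t \<omega>) = 0"
    and c0: "c 0 = 1"
    and c_abs: "summable (\<lambda>j. \<bar>c j\<bar>)"
    and c1: "suminf c \<noteq> 0"
    and d: "0 < d" "d < 1/2"
  shows "summable (\<lambda>h. autocov M (lin_proc c \<epsilon>) (int (Suc h)))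
    \<and> ((\<lambda>T. Var M (\<lambda>\<omega>. \<Sum>t = 1..T. partial_coef d t * lin_proc c \<epsilon> (int t) \<omega>)
              / (\<Sum>t = 1..T. (partial_coef d t)\<^sup>2))
        \<longlongrightarrow> autocov M (lin_proc c \<epsilon>) 0
              + 2 * (\<Sum>h. autocov M (lin_proc c \<epsilon>) (int (Suc h)))) at_top
    \<and> autocov M (lin_proc c \<epsilon>) 0 + 2 * (\<Sum>h. autocov M (lin_proc c \<epsilon>) (int (Suc h)))
        = \<sigma>2 * (suminf c)\<^sup>2"
proof -
  interpret lp M \<epsilon> c \<sigma>2
    using assms unfolding lp_def lp_axioms_def expect_def by auto
  define G where "G h = \<sigma>2 * uu c h" for h
  have ac: "autocov M (lin_proc c \<epsilon>) (int h) = G h" for h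
    unfolding autocov_def expect_def G_def using x_prod[of 0 "int h"] by simp
  have ac0: "autocov M (lin_proc c \<epsilon>) 0 = G 0" using ac[of 0] by simp
  have sG: "summable (\<lambda>h. \<bar>G (Suc h)\<bar>)"
  proof (rule summable_comparison_test'[where g = "\<lambda>h. \<bar>\<sigma>2\<bar> * vv c (Suc h)"])
    show "summable (\<lambda>h. \<bar>\<sigma>2\<bar> * vv c (Suc h))"
      using summable_vv[OF c_abs] by (intro summable_mult) (simp add: summable_Suc_iff)
    show "norm \<bar>G (Suc n)\<bar> \<le> \<bar>\<sigma>2\<bar> * vv c (Suc n)" for n
      unfolding G_def using uu_le_vv[OF c_abs, of "Suc n"] by (simp add: abs_mult mult_left_mono)
  qed
  have s1: "summable (\<lambda>h. G (Suc h))" using sG by (rule summable_rabs_cancel)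
  have den: "(\<Sum>t = 1..T. (partial_coef d t)\<^sup>2) = (\<Sum>s<T. (rr d s)\<^sup>2)" for T
    unfolding rr_def by (simp add: sum.atLeast1_atMost_eq)
  have lim: "(\<lambda>T. Var M (\<lambda>\<omega>. \<Sum>t = 1..T. partial_coef d t * lin_proc c \<epsilon> (int t) \<omega>)
              / (\<Sum>t = 1..T. (partial_coef d t)\<^sup>2)) \<longlonglongrightarrow> G 0 + 2 * (\<Sum>h. G (Suc h))"
    unfolding Var_formula den using ratio_lim[OF d sG] unfolding G_def by simp
  have id: "G 0 + 2 * (\<Sum>h. G (Suc h)) = \<sigma>2 * (suminf c)\<^sup>2"
  proof -
    have s2: "summable (\<lambda>h. uu c (Suc h))"
      using s1 sigma_pos unfolding G_def by simp
    have "G 0 + 2 * (\<Sum>h. G (Suc h)) = \<sigma>2 * (uu c 0 + 2 * (\<Sum>h. uu c (Suc h)))"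
      unfolding G_def using suminf_mult[OF s2, of \<sigma>2] by (simp add: algebra_simps)
    also have "\<dots> = \<sigma>2 * (suminf c)\<^sup>2" by (simp add: uu_identity[OF c_abs])
    finally show ?thesis .
  qed
  have ac': "(\<lambda>h. autocov M (lin_proc c \<epsilon>) (int (Suc h))) = (\<lambda>h. G (Suc h))"
    using ac by (intro ext) (metis of_nat_Suc)
  show ?thesis unfolding ac' ac0 using s1 lim id by simp
qed


end
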